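(* Let $m\ge 1$, $q=2^m$, and let $n$ be odd. Let \[L(x)=\sum_{i=0}^{m-1}L_i\big(x^{2^i}\big),\] where each $L_i$ is a $q$-linear polynomial over $\mathbb F_{q^n}$. Then $\mathrm{Tr}(x^{q+1})+L(x)$ is a permutation polynomial of $\mathbb F_{q^n}$ if and only if all three of the following hold: $L_i(1)\in\mathbb F_q$ for $0\le i<m$; the polynomial \[\ell(x)=\sum_{i=0}^{m-1}(L_i(1)x)^{2^{m-i}}+x^{2^{m-1}}\] is a permutation polynomial of $\mathbb F_q$; and $\ker\mathrm{Tr}\cap\ker L^\prime=\{0\}$.
   Context: $\mathrm{Tr}$ denotes the trace map of $\mathbb F_{q^n}$ over $\mathbb F_q$, $\mathrm{Tr}(x)=\sum_{j=0}^{n-1}x^{q^j}$. Polynomials are regarded as maps on $\mathbb F_{q^n}$. A $q$-linear polynomial over $\mathbb F_{q^n}$ is one of the form $\sum_{j=0}^{n-1}a_jx^{q^j}$ with $a_j\in\mathbb F_{q^n}$; a $2$-linear polynomial is one of the form $\sum_{j=0}^{mn-1}a_jx^{2^j}$. For a $2$-linear polynomial $L(x)=\sum_{j=0}^{mn-1}a_jx^{2^j}$, its adjoint is $L^\prime(x)=\sum_{j=0}^{mn-1}(a_jx)^{2^{-j}}$, where $y\mapsto y^{2^{-j}}$ denotes the inverse of the automorphism $y\mapsto y^{2^j}$ of $\mathbb F_{q^n}$; equivalently $L'$ is the unique map with $\mathrm{T}(\alpha L(\beta))=\mathrm{T}(L^\prime(\alpha)\beta)$ for all $\alpha,\beta\in\mathbb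 F_{q^n}$, where $\mathrm T$ is the absolute trace of $\mathbb F_{q^n}$ over $\mathbb F_2$. $\ker$ denotes the kernel of an additive map on $\mathbb F_{q^n}$. *)

theory Defs
  imports Main
begin

definition rel_trace :: "nat \<Rightarrow> nat \<Rightarrow> 'a::field \<Rightarrow> 'a" where
  "rel_trace q n x = (\<Sum>j<n. x ^ (q ^ j))"

definition qlin :: "nat \<Rightarrow> nat \<Rightarrow> (nat \<Rightarrow> 'a::field) \<Rightarrow> 'a \<Rightarrow> 'a" where
  "qlin q n c x = (\<Sum>j<n. c j * x ^ (q ^ j))"

definition Lpoly :: "nat \<Rightarrow> nat \<Rightarrow> (nat \<Rightarrow> nat \<Rightarrow> 'a::field) \<Rightarrow> 'a \<Rightarrow> 'a" where
  "Lpoly m n a x = (\<Sum>i<m. qlin (2 ^ m) n (a i) (x ^ (2 ^ i)))"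

text \<open>Adjoint of L. As a 2-linear polynomial, L(x) = sum_{i<m, j<n} a i j x^(2^(i+m j)),
  so L'(y) = sum (a i j * y)^(2^(-(i+m j))), and the inverse of y \<mapsto> y^(2^k) on
  GF(2^(mn)) (k < mn) is y \<mapsto> y^(2^(mn-k)).\<close>
definition Ladj :: "nat \<Rightarrow> nat \<Rightarrow> (nat \<Rightarrow> nat \<Rightarrow> 'a::field) \<Rightarrow> 'a \<Rightarrow> 'a" where
  "Ladj m n a y = (\<Sum>i<m. \<Sum>j<n. (a i j * y) ^ (2 ^ (m * n - (i + m * j))))"

definition subfield_q :: "nat \<Rightarrow> 'a::field set" where
  "subfield_q q = {x. x ^ q = x}"

end

theory Submission
  imports Defs "HOL-Computational_Algebra.Polynomial"
begin

definition sg :: "'b::ab_group_add set \<Rightarrow> bool" where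
  "sg V \<longleftrightarrow> 0 \<in> V \<and> (\<forall>x\<in>V. \<forall>y\<in>V. x + y \<in> V) \<and> (\<forall>x\<in>V. -x \<in> V)"

definition ah :: "'b::ab_group_add set \<Rightarrow> ('b \<Rightarrow> 'c::ab_group_add) \<Rightarrow> bool" where
  "ah V h \<longleftrightarrow> (\<forall>x\<in>V. \<forall>y\<in>V. h (x + y) = h x + h y)"

definition sumset :: "'b::ab_group_add set \<Rightarrow> 'b set \<Rightarrow> 'b set" where
  "sumset A B = (\<lambda>(x, y). x + y) ` (A \<times> B)"

lemma sg_diff: "sg V \<Longrightarrow> x \<in> V \<Longrightarrow> y \<in> V \<Longrightarrow> x - y \<in> V"
  unfolding sg_def by (metis diff_conv_add_uminus)

lemma card_fibers_const:
  assumes "finite D" "\<And>y. y \<in> h ` D \<Longrightarrow> card {x \<in> D. h x = y} = k"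
  shows "card D = card (h ` D) * k"
proof -
  have "card D = (\<Sum>x\<in>D. (1::nat))" by simp
  also have "\<dots> = (\<Sum>y\<in>h ` D. \<Sum>x\<in>{x. x \<in> D \<and> h x = y}. 1)"
    by (rule sum.group[symmetric]) (use assms in auto)
  also have "\<dots> = (\<Sum>y\<in>h ` D. k)"
    by (rule sum.cong) (use assms in auto)
  finally show ?thesis by simp
qed

lemma ah_zero: "ah V h \<Longrightarrow> 0 \<in> V \<Longrightarrow> h 0 = 0"
  unfolding ah_def by (metis add.right_neutral add_left_imp_eq)

lemma ah_diff: "ah V h \<Longrightarrow> sg V \<Longrightarrow> x \<in> V \<Longrightarrow> y \<in> V \<Longrightarrow> h (x - y) = h x - h y"
proof -
  assume h: "ah V h" "sg V" "x \<in> V" "y \<in> V"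
  then have "x - y \<in> V" unfolding sg_def by (metis diff_conv_add_uminus)
  then have "h (x - y + y) = h (x - y) + h y" using h unfolding ah_def by blast
  then show ?thesis by simp
qed

lemma kernel_count:
  assumes "sg V" "finite V" "ah V h"
  shows "card V = card (h ` V) * card {x \<in> V. h x = 0}"
proof (rule card_fibers_const[OF assms(2)])
  fix y assume "y \<in> h ` V"
  then obtain x0 where x0: "x0 \<in> V" "y = h x0" by auto
  have "{x \<in> V. h x = y} = (\<lambda>k. k + x0) ` {k \<in> V. h k = 0}"
  proof (intro set_eqI iffI)
    fix x assume x: "x \<in> {x \<in> V. h x = y}"
    have "x - x0 \<in> V" using x x0 assms(1) unfolding sg_def by (metis diff_conv_add_uminus mem_Collect_eq)
    moreover have "h (x - x0) = 0" using ah_diff[OF assms(3,1)] x x0 by auto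
    ultimately show "x \<in> (\<lambda>k. k + x0) ` {k \<in> V. h k = 0}" by (auto intro!: image_eqI[of _ _ "x - x0"])
  next
    fix x assume "x \<in> (\<lambda>k. k + x0) ` {k \<in> V. h k = 0}"
    then obtain k where k: "k \<in> V" "h k = 0" "x = k + x0" by auto
    then show "x \<in> {x \<in> V. h x = y}" using assms(1,3) x0 unfolding sg_def ah_def by auto
  qed
  moreover have "inj_on (\<lambda>k. k + x0) {k \<in> V. h k = 0}" by (auto intro: inj_onI)
  ultimately show "card {x \<in> V. h x = y} = card {x \<in> V. h x = 0}" by (simp add: card_image)
qed

lemma sumset_count:
  assumes "sg A" "sg B" "finite A" "finite B"
  shows "card (A \<inter> B) * card (sumset A B) = card A * card B"
proof -
  have "card (A \<times> B) = card (sumset A B) * card (A \<inter> B)"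
    unfolding sumset_def
  proof (rule card_fibers_const)
    show "finite (A \<times> B)" using assms by auto
    fix z assume "z \<in> (\<lambda>(x, y). x + y) ` (A \<times> B)"
    then obtain a0 b0 where ab: "a0 \<in> A" "b0 \<in> B" "z = a0 + b0" by auto
    have "{p \<in> A \<times> B. (\<lambda>(x, y). x + y) p = z} = (\<lambda>w. (a0 + w, b0 - w)) ` (A \<inter> B)"
    proof (intro set_eqI iffI)
      fix p assume p: "p \<in> {p \<in> A \<times> B. (\<lambda>(x, y). x + y) p = z}"
      then obtain x y where xy: "p = (x, y)" "x \<in> A" "y \<in> B" "x + y = z" by auto
      have "x - a0 \<in> A" using xy ab assms(1) unfolding sg_def by (metis diff_conv_add_uminus)
      moreover have "x - a0 = b0 - y" using xy ab by (simp add: algebra_simps)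
      moreover have "b0 - y \<in> B" using xy ab assms(2) unfolding sg_def by (metis diff_conv_add_uminus)
      moreover have "p = (a0 + (x - a0), b0 - (x - a0))" using xy ab by (simp add: algebra_simps)
      ultimately show "p \<in> (\<lambda>w. (a0 + w, b0 - w)) ` (A \<inter> B)"
        by (intro image_eqI[of _ _ "x - a0"]) auto
    next
      fix p assume "p \<in> (\<lambda>w. (a0 + w, b0 - w)) ` (A \<inter> B)"
      then obtain w where w: "w \<in> A" "w \<in> B" "p = (a0 + w, b0 - w)" by auto
      have "a0 + w \<in> A" using w ab assms(1) unfolding sg_def by blast
      moreover have "b0 - w \<in> B" using w ab assms(2) unfolding sg_def by (metis diff_conv_add_uminus)
      ultimately show "p \<in> {p \<in> A \<times> B. (\<lambda>(x, y). x + y) p = z}" using w ab by auto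
    qed
    moreover have "inj_on (\<lambda>w. (a0 + w, b0 - w)) (A \<inter> B)" by (auto intro: inj_onI)
    ultimately show "card {p \<in> A \<times> B. (\<lambda>(x, y). x + y) p = z} = card (A \<inter> B)"
      by (simp add: card_image)
  qed
  then show ?thesis by (simp add: card_cartesian_product)
qed

lemma flip_sum_zero:
  fixes \<phi> :: "'b::ab_group_add \<Rightarrow> int"
  assumes "sg W" "finite W" "w0 \<in> W" "\<And>w. w \<in> W \<Longrightarrow> \<phi> (w + w0) = - \<phi> w"
  shows "sum \<phi> W = 0"
proof -
  have "sum \<phi> W = sum (\<lambda>w. \<phi> (w + w0)) W"
    by (rule sum.reindex_bij_witness[of _ "\<lambda>w. w + w0" "\<lambda>w. w - w0"])
       (use assms(1,3) sg_diff[OF assms(1)] in \<open>auto simp: sg_def\<close>)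
  also have "\<dots> = - sum \<phi> W" using assms(4) by (simp add: sum_negf)
  finally show ?thesis by simp
qed

lemma sum_lessThan_add: "(\<Sum>k<a + b. f k) = (\<Sum>k<a. f k) + (\<Sum>i<b. f (a + i))"
  for f :: "nat \<Rightarrow> 'b::comm_monoid_add"
  by (induction b) (simp_all add: add.assoc)

lemma sum_mult_index: "(\<Sum>k<m * n. f k) = (\<Sum>j<n. \<Sum>i<m. f (m * j + i))"
  for f :: "nat \<Rightarrow> 'b::comm_monoid_add"
proof (induction n)
  case (Suc n)
  have "m * Suc n = m * n + m" by simp
  then have "(\<Sum>k<m * Suc n. f k) = (\<Sum>k<m * n. f k) + (\<Sum>i<m. f (m * n + i))"
    by (simp only: sum_lessThan_add)
  then show ?case using Suc by simp
qed simp

lemma sum_shift_cyc: "g n = g 0 \<Longrightarrow> (\<Sum>j<n. g (Suc j)) = (\<Sum>j<n. (g j :: 'b::ab_group_add))"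
proof -
  assume h: "g n = g 0"
  have "(\<Sum>j<Suc n. g j) = g 0 + (\<Sum>j<n. g (Suc j))" by (rule sum.lessThan_Suc_shift)
  moreover have "(\<Sum>j<Suc n. g j) = (\<Sum>j<n. g j) + g n" by simp
  ultimately show ?thesis using h by (simp add: algebra_simps)
qed

lemma root_bound_sum:
  fixes d :: "nat \<Rightarrow> 'a::field" and e :: "nat \<Rightarrow> nat"
  assumes "inj_on e {..<k}" "i0 < k" "d i0 \<noteq> 0" "\<And>i. i < k \<Longrightarrow> e i \<le> D"
  shows "card {x. (\<Sum>i<k. d i * x ^ (e i)) = 0} \<le> D"
proof -
  define p where "p = (\<Sum>i<k. monom (d i) (e i))"
  have ev: "poly p x = (\<Sum>i<k. d i * x ^ (e i))" for x
    unfolding p_def by (simp add: poly_sum poly_monom)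
  have "coeff p (e i0) = (\<Sum>i<k. if i = i0 then d i0 else 0)"
    unfolding p_def coeff_sum
    by (rule sum.cong) (use assms(1,2) in \<open>auto simp: coeff_monom inj_on_def\<close>)
  also have "\<dots> = d i0" using assms(2) by simp
  finally have "p \<noteq> 0" using assms(3) by auto
  moreover have "degree p \<le> D"
    unfolding p_def by (rule degree_sum_le) (auto intro: order.trans[OF degree_monom_le] assms(4))
  ultimately show ?thesis using card_poly_roots_bound[of p] ev by simp
qed

definition atr :: "nat \<Rightarrow> 'a::field \<Rightarrow> 'a" where
  "atr k x = (\<Sum>i<k. x ^ (2 ^ i))"

definition perp :: "('a::field \<Rightarrow> 'a) \<Rightarrow> 'a set \<Rightarrow> 'a set \<Rightarrow> 'a set" where
  "perp T V U = {y \<in> V. \<forall>u\<in>U. T (y * u) = 0}"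

locale ctx =
  fixes m n :: nat and a :: "nat \<Rightarrow> nat \<Rightarrow> 'a::{finite,field}"
  assumes m1: "m \<ge> 1" and oddn: "odd n" and cardN: "card (UNIV :: 'a set) = 2 ^ (m * n)"
begin

lemma n1: "n \<ge> 1" using oddn by (cases n) auto

lemma mn1: "m * n \<ge> 1" using m1 n1 by simp

lemma fermat1:
  assumes "x \<noteq> (0::'a)" shows "x ^ (2 ^ (m * n) - 1) = 1"
proof -
  let ?U = "UNIV - {0::'a}"
  have "prod (\<lambda>y. x * y) ?U = prod id ?U"
    by (rule prod.reindex_bij_witness[of _ "\<lambda>y. y / x" "\<lambda>y. x * y"]) (use assms in auto)
  moreover have "prod (\<lambda>y. x * y) ?U = x ^ card ?U * prod id ?U"
    by (simp add: prod.distrib)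
  moreover have "prod id ?U \<noteq> 0" by (simp add: prod_zero_iff)
  moreover have "card ?U = 2 ^ (m * n) - 1" using cardN by (simp add: card_Diff_singleton)
  ultimately show ?thesis by simp
qed

lemma fermat: "(x::'a) ^ (2 ^ (m * n)) = x"
proof (cases "x = 0")
  case True then show ?thesis by simp
next
  case False
  have "(2::nat) ^ (m * n) = Suc (2 ^ (m * n) - 1)" by simp
  then have "x ^ (2 ^ (m * n)) = x * x ^ (2 ^ (m * n) - 1)" by (metis power_Suc)
  then show ?thesis using fermat1[OF False] by simp
qed

lemma two: "(2::'a) = 0"
proof -
  have "even ((2::nat) ^ (m * n))" using mn1 by simp
  then have "odd ((2::nat) ^ (m * n) - 1)" by (simp add: mn1)
  then have "(-1::'a) ^ (2 ^ (m * n) - 1) = -1" by (rule neg_one_odd_power)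
  then have "(-1::'a) = 1" using fermat1[of "-1"] by simp
  then show ?thesis by (metis add_eq_0_iff2 one_add_one)
qed

lemma add_self[simp]: "(x::'a) + x = 0"
  by (metis mult_2 mult_zero_left two)

lemma neg_id[simp]: "- (x::'a) = x"
  by (metis add_self add_eq_0_iff2)

lemma diff_is_add[simp]: "(x::'a) - y = x + y"
  by (simp add: diff_conv_add_uminus)

lemma sum_zero_iff: "(x::'a) + y = 0 \<longleftrightarrow> x = y"
  by (metis add_eq_0_iff2 neg_id)

lemma sg_c2: "0 \<in> V \<Longrightarrow> (\<And>x y. x \<in> V \<Longrightarrow> y \<in> V \<Longrightarrow> x + y \<in> (V::'a set)) \<Longrightarrow> sg V"
  unfolding sg_def by auto

lemma frob_add: "((x::'a) + y) ^ (2 ^ k) = x ^ (2 ^ k) + y ^ (2 ^ k)"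
proof (induction k)
  case (Suc k)
  have "(x + y) ^ (2 ^ Suc k) = ((x + y) ^ (2 ^ k))\<^sup>2" by (simp add: power_mult[symmetric] mult.commute)
  also have "\<dots> = (x ^ (2 ^ k))\<^sup>2 + (y ^ (2 ^ k))\<^sup>2" using Suc by (simp add: power2_sum two)
  finally show ?case by (simp add: power_mult[symmetric] mult.commute)
qed simp

lemma frob_sum: "(sum f S :: 'a) ^ (2 ^ k) = (\<Sum>i\<in>S. f i ^ (2 ^ k))"
proof (induction S rule: infinite_finite_induct)
  case (insert x F) then show ?case by (simp add: frob_add)
qed simp_all

lemma pow_pow2: "((x::'a) ^ (2 ^ i)) ^ (2 ^ j) = x ^ (2 ^ (i + j))"
  by (simp add: power_mult[symmetric] power_add)

lemma pow_wrap: "(x::'a) ^ (2 ^ (m * n + k)) = x ^ (2 ^ k)"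
  by (metis fermat pow_pow2)

lemma qpow: "((2::nat) ^ m) ^ j = 2 ^ (m * j)"
  by (simp add: power_mult)

abbreviation F :: "'a set" where "F \<equiv> subfield_q (2 ^ m)"

lemma F_iff: "x \<in> F \<longleftrightarrow> x ^ (2 ^ m) = x" unfolding subfield_q_def by simp

lemma F_0[simp]: "0 \<in> F" using m1 by (simp add: F_iff)
lemma F_1[simp]: "1 \<in> F" by (simp add: F_iff)
lemma F_add: "x \<in> F \<Longrightarrow> y \<in> F \<Longrightarrow> x + y \<in> F" by (simp add: F_iff frob_add)
lemma F_mult: "x \<in> F \<Longrightarrow> y \<in> F \<Longrightarrow> x * y \<in> F" by (simp add: F_iff power_mult_distrib)
lemma F_div: "x \<in> F \<Longrightarrow> y \<in> F \<Longrightarrow> x / y \<in> F" by (simp add: F_iff power_divide)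
lemma F_pow2: "x \<in> F \<Longrightarrow> x ^ (2 ^ i) \<in> F"
  unfolding F_iff by (metis pow_pow2 add.commute)
lemma F_sum: "(\<And>i. i \<in> S \<Longrightarrow> f i \<in> F) \<Longrightarrow> sum f S \<in> F"
  by (simp add: F_iff frob_sum)
lemma F_sg: "sg F" by (rule sg_c2) (auto intro: F_add)

lemma F_powq: "x \<in> F \<Longrightarrow> x ^ ((2 ^ m) ^ j) = x"
proof (induction j)
  case (Suc j)
  then show ?case by (simp add: power_mult F_iff)
qed simp

lemma q2: "(2::nat) ^ m \<ge> 2"
  using m1 by (cases m) auto

lemma F_card_le: "card F \<le> 2 ^ m"
proof -
  have "card {x::'a. (\<Sum>i<(2::nat). 1 * x ^ ((\<lambda>i. if i = 0 then 2 ^ m else 1) i)) = 0} \<le> 2 ^ m"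
    by (rule root_bound_sum[of "\<lambda>i. if i = 0 then 2^m else (1::nat)" 2 0 "\<lambda>_. 1::'a"])
       (use q2 m1 in \<open>auto simp: inj_on_def\<close>)
  moreover have "{x::'a. (\<Sum>i<(2::nat). 1 * x ^ ((\<lambda>i. if i = 0 then 2 ^ m else 1) i)) = 0} = F"
  proof -
    have s2: "(\<Sum>i<(2::nat). f i) = f 0 + f 1" for f :: "nat \<Rightarrow> 'a"
      by (simp add: numeral_2_eq_2)
    show ?thesis unfolding s2 by (auto simp: F_iff sum_zero_iff)
  qed
  ultimately show ?thesis by simp
qed

end

definition chi :: "('a::field \<Rightarrow> 'a) \<Rightarrow> 'a \<Rightarrow> int" where
  "chi T z = (if T z = 0 then 1 else -1)"

definition nondeg :: "('a::field \<Rightarrow> 'a) \<Rightarrow> 'a set \<Rightarrow> bool" where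
  "nondeg T V \<longleftrightarrow> (\<forall>u\<in>V. u \<noteq> 0 \<longrightarrow> (\<exists>y\<in>V. T (y * u) \<noteq> 0))"

context ctx begin

abbreviation T :: "'a \<Rightarrow> 'a" where "T \<equiv> atr (m * n)"

lemma T_add: "T (x + y) = T x + T y"
  unfolding atr_def by (simp add: frob_add sum.distrib)

lemma T_0[simp]: "T 0 = 0"
  unfolding atr_def by (simp add: power_0_left)

lemma T_sum: "T (sum f S) = (\<Sum>i\<in>S. T (f i))"
  unfolding atr_def by (simp add: frob_sum) (rule sum.swap)

lemma T_sq: "T (x ^ 2) = T x"
proof -
  have e: "(x ^ 2) ^ (2 ^ i) = x ^ (2 ^ Suc i)" for i
    by (simp add: power_mult[symmetric] mult.commute)
  show ?thesis unfolding atr_def e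
    by (rule sum_shift_cyc[of "\<lambda>i. x ^ (2 ^ i)"]) (simp add: fermat)
qed

lemma T_frob: "T (x ^ (2 ^ k)) = T x"
proof (induction k)
  case (Suc k)
  have "x ^ (2 ^ Suc k) = (x ^ (2 ^ k)) ^ 2" by (simp add: power_mult[symmetric] mult.commute)
  then show ?case using Suc T_sq by simp
qed simp

lemma T_01: "T x = 0 \<or> T x = 1"
proof -
  have e: "(x ^ (2 ^ i)) ^ (2 ^ 1) = (x ^ 2) ^ (2 ^ i)" for i
    by (simp add: power_mult[symmetric] mult.commute)
  have "(T x) ^ (2 ^ 1) = T (x ^ 2)"
    unfolding atr_def frob_sum e ..
  then have "(T x) ^ 2 = T x" using T_sq by simp
  then have "T x * T x = T x" by (simp add: power2_eq_square)
  then show ?thesis by simp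
qed

lemma T_nz: "\<exists>x. T x \<noteq> 0"
proof (rule ccontr)
  assume "\<not> (\<exists>x. T x \<noteq> 0)"
  then have "{x::'a. (\<Sum>i<m * n. 1 * x ^ (2 ^ i)) = 0} = UNIV" by (auto simp: atr_def)
  moreover have "card {x::'a. (\<Sum>i<m * n. 1 * x ^ (2 ^ i)) = 0} \<le> 2 ^ (m * n - 1)"
  proof (rule root_bound_sum[of "\<lambda>i. 2 ^ i" "m * n" 0 "\<lambda>_. 1::'a"])
    show "inj_on (\<lambda>i. (2::nat) ^ i) {..<m * n}" by (auto simp: inj_on_def)
    show "0 < m * n" using mn1 by simp
    show "(2::nat) ^ i \<le> 2 ^ (m * n - 1)" if "i < m * n" for i
      by (rule power_increasing) (use that in auto)
  qed simp
  moreover have "(2::nat) ^ (m * n - 1) < 2 ^ (m * n)" using mn1 by simp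
  ultimately show False using cardN mn1 by simp
qed

lemma nondeg_U: "nondeg T UNIV"
  unfolding nondeg_def
proof (intro ballI impI)
  fix u :: 'a assume "u \<noteq> 0"
  obtain x0 where "T x0 \<noteq> 0" using T_nz by blast
  then have "T ((x0 / u) * u) \<noteq> 0" using \<open>u \<noteq> 0\<close> by simp
  then show "\<exists>y\<in>UNIV. T (y * u) \<noteq> 0" by blast
qed

lemma chi_flip: "T w = 1 \<Longrightarrow> chi T (z + w) = - chi T z"
  using T_01[of z] by (auto simp: chi_def T_add)

lemma DL:
  assumes "sg V" "sg U" "U \<subseteq> V" "nondeg T V"
  shows "card U * card (perp T V U) = card V"
proof -
  let ?P = "perp T V U"
  have fin: "finite X" for X :: "'a set" by simp
  have "(\<Sum>y\<in>V. \<Sum>u\<in>U. chi T (y * u)) = (\<Sum>y\<in>V. if y \<in> ?P then int (card U) else 0)"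
  proof (rule sum.cong)
    fix y assume y: "y \<in> V"
    show "(\<Sum>u\<in>U. chi T (y * u)) = (if y \<in> ?P then int (card U) else 0)"
    proof (cases "y \<in> ?P")
      case True
      then have "\<forall>u\<in>U. chi T (y * u) = 1" by (auto simp: perp_def chi_def)
      then show ?thesis using True by simp
    next
      case False
      then obtain u0 where u0: "u0 \<in> U" "T (y * u0) \<noteq> 0" using y by (auto simp: perp_def)
      then have "T (y * u0) = 1" using T_01 by blast
      then have "(\<Sum>u\<in>U. chi T (y * u)) = 0"
        by (intro flip_sum_zero[OF assms(2) fin u0(1)]) (simp add: distrib_left chi_flip)
      then show ?thesis using False by simp
    qed
  qed simp
  also have "\<dots> = (\<Sum>y\<in>V \<inter> ?P. int (card U))" by (rule sum.inter_restrict[symmetric]) simp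
  also have "V \<inter> ?P = ?P" by (auto simp: perp_def)
  finally have S1: "(\<Sum>y\<in>V. \<Sum>u\<in>U. chi T (y * u)) = int (card ?P) * int (card U)" by simp
  have "(\<Sum>y\<in>V. \<Sum>u\<in>U. chi T (y * u)) = (\<Sum>u\<in>U. \<Sum>y\<in>V. chi T (y * u))" by (rule sum.swap)
  also have "\<dots> = (\<Sum>u\<in>U. if u = 0 then int (card V) else 0)"
  proof (rule sum.cong)
    fix u assume u: "u \<in> U"
    show "(\<Sum>y\<in>V. chi T (y * u)) = (if u = 0 then int (card V) else 0)"
    proof (cases "u = 0")
      case True then show ?thesis by (simp add: chi_def)
    next
      case False
      then obtain y0 where y0: "y0 \<in> V" "T (y0 * u) \<noteq> 0"
        using assms(3,4) u unfolding nondeg_def by blast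
      then have "T (y0 * u) = 1" using T_01 by blast
      then have "(\<Sum>y\<in>V. chi T (y * u)) = 0"
        by (intro flip_sum_zero[OF assms(1) fin y0(1)]) (simp add: distrib_right chi_flip)
      then show ?thesis using False by simp
    qed
  qed simp
  also have "\<dots> = int (card V)" using assms(2) unfolding sg_def by (simp add: sum.delta)
  finally have "int (card ?P) * int (card U) = int (card V)" using S1 by simp
  then show ?thesis by (metis mult.commute of_nat_eq_iff of_nat_mult)
qed

lemma ah_image_sg: "sg V \<Longrightarrow> ah V A \<Longrightarrow> sg (A ` V :: 'a set)"
proof (rule sg_c2)
  assume "sg V" "ah V A"
  then show "0 \<in> A ` V" using ah_zero[of V A] unfolding sg_def by force
  fix x y assume "x \<in> A ` V" "y \<in> A ` V"
  then obtain u v where "u \<in> V" "v \<in> V" "x = A u" "y = A v" by auto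
  then show "x + y \<in> A ` V" using \<open>sg V\<close> \<open>ah V A\<close> unfolding sg_def ah_def by (metis image_eqI)
qed

lemma GD:
  assumes V: "sg V" and nd: "nondeg T V"
    and AV: "\<And>x. x \<in> V \<Longrightarrow> A x \<in> V" and BV: "\<And>y. y \<in> V \<Longrightarrow> B y \<in> V"
    and aA: "ah V A"
    and adj: "\<And>x y. x \<in> V \<Longrightarrow> y \<in> V \<Longrightarrow> T (y * A x) = T (B y * x)"
  shows "card {x \<in> V. A x = 0} = card {y \<in> V. B y = 0}"
proof -
  let ?I = "A ` V"
  have sI: "sg ?I" by (rule ah_image_sg[OF V aA])
  have kB: "{y \<in> V. B y = 0} = perp T V ?I"
  proof (intro set_eqI iffI)
    fix y assume "y \<in> {y \<in> V. B y = 0}"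
    then show "y \<in> perp T V ?I" using adj by (auto simp: perp_def)
  next
    fix y assume y: "y \<in> perp T V ?I"
    then have yV: "y \<in> V" and h: "\<forall>x\<in>V. T (B y * x) = 0" using adj by (auto simp: perp_def)
    have "B y = 0"
    proof (rule ccontr)
      assume "B y \<noteq> 0"
      then obtain x where "x \<in> V" "T (x * B y) \<noteq> 0" using nd BV[OF yV] unfolding nondeg_def by blast
      then show False using h by (simp add: mult.commute)
    qed
    then show "y \<in> {y \<in> V. B y = 0}" using yV by simp
  qed
  have "card ?I * card (perp T V ?I) = card V" by (rule DL[OF V sI]) (use AV nd in auto)
  moreover have "card V = card ?I * card {x \<in> V. A x = 0}" by (rule kernel_count[OF V _ aA]) simp
  moreover have "card ?I > 0" using V unfolding sg_def by (auto simp: card_gt_0_iff)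
  moreover have "V \<noteq> {}" using V unfolding sg_def by auto
  ultimately have "card (perp T V ?I) = card {x \<in> V. A x = 0}" by simp
  then show ?thesis using kB by simp
qed

lemma ker_one:
  assumes V: "sg V" and aA: "ah V A"
  shows "inj_on A V \<longleftrightarrow> card {x \<in> V. A x = (0::'a)} = 1"
proof
  have A0: "A 0 = 0" using ah_zero[OF aA] V unfolding sg_def by blast
  assume "inj_on A V"
  then have "{x \<in> V. A x = 0} = {0}" using A0 V unfolding sg_def inj_on_def by auto
  then show "card {x \<in> V. A x = 0} = 1" by simp
next
  have A0: "A 0 = 0" using ah_zero[OF aA] V unfolding sg_def by blast
  assume "card {x \<in> V. A x = 0} = 1"
  then obtain z where z: "{x \<in> V. A x = 0} = {z}" by (rule card_1_singletonE)
  have "0 \<in> {x \<in> V. A x = 0}" using A0 V unfolding sg_def by simp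
  then have K: "{x \<in> V. A x = 0} = {0}" using z by auto
  show "inj_on A V"
  proof (rule inj_onI)
    fix x y assume xy: "x \<in> V" "y \<in> V" "A x = A y"
    then have "A (x - y) = 0" using ah_diff[OF aA V] by simp
    moreover have "x - y \<in> V" using sg_diff[OF V xy(1,2)] .
    ultimately have "x - y = 0" using K by blast
    then show "x = y" by simp
  qed
qed

end

context ctx begin

abbreviation Tr :: "'a \<Rightarrow> 'a" where "Tr \<equiv> rel_trace (2 ^ m) n"

lemma qpow_wrap: "(x::'a) ^ ((2 ^ m) ^ n) = x"
  by (simp add: qpow fermat)

lemma Tr_add: "Tr (x + y) = Tr x + Tr y"
  unfolding rel_trace_def by (simp add: qpow frob_add sum.distrib)

lemma Tr_0[simp]: "Tr 0 = 0"
  unfolding rel_trace_def by (simp add: power_0_left)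

lemma Tr_q: "Tr x ^ (2 ^ m) = Tr x"
proof -
  have e: "(x ^ ((2 ^ m) ^ j)) ^ (2 ^ m) = x ^ ((2 ^ m) ^ Suc j)" for j
    by (simp add: power_mult[symmetric] mult.commute)
  show ?thesis unfolding rel_trace_def frob_sum e
    by (rule sum_shift_cyc[of "\<lambda>j. x ^ ((2 ^ m) ^ j)"]) (simp add: qpow_wrap)
qed

lemma Tr_F: "Tr x \<in> F" using Tr_q F_iff by blast

lemma Tr_frobq: "Tr (x ^ (2 ^ m)) = Tr x"
proof -
  have e: "(x ^ (2 ^ m)) ^ ((2 ^ m) ^ j) = x ^ ((2 ^ m) ^ Suc j)" for j
    by (simp add: power_mult[symmetric])
  show ?thesis unfolding rel_trace_def e
    by (rule sum_shift_cyc[of "\<lambda>j. x ^ ((2 ^ m) ^ j)"]) (simp add: qpow_wrap)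
qed

lemma Tr_frobqk: "Tr (x ^ ((2 ^ m) ^ k)) = Tr x"
proof (induction k)
  case (Suc k)
  have "x ^ ((2 ^ m) ^ Suc k) = (x ^ ((2 ^ m) ^ k)) ^ (2 ^ m)"
    by (simp add: power_mult[symmetric] mult.commute)
  then show ?case using Suc Tr_frobq by simp
qed simp

lemma Tr_mult_F: "z \<in> F \<Longrightarrow> Tr (z * y) = z * Tr y"
  unfolding rel_trace_def by (simp add: power_mult_distrib F_powq sum_distrib_left)

lemma of_nat_n: "(of_nat n :: 'a) = 1"
proof -
  obtain k where "n = 2 * k + 1" using oddn oddE by blast
  then show ?thesis by (simp add: two)
qed

lemma Tr_on_F: "z \<in> F \<Longrightarrow> Tr z = z"
  unfolding rel_trace_def by (simp add: F_powq of_nat_n)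

lemma T_Tr: "T w = (\<Sum>i<m. (Tr w) ^ (2 ^ i))"
proof -
  have "T w = (\<Sum>j<n. \<Sum>i<m. w ^ (2 ^ (m * j + i)))"
    unfolding atr_def by (rule sum_mult_index)
  also have "\<dots> = (\<Sum>i<m. \<Sum>j<n. w ^ (2 ^ (m * j + i)))" by (rule sum.swap)
  also have "\<dots> = (\<Sum>i<m. (Tr w) ^ (2 ^ i))"
    unfolding rel_trace_def frob_sum by (simp add: qpow pow_pow2)
  finally show ?thesis .
qed

lemma Tr_ker_card: "card {x::'a. Tr x = 0} \<le> (2 ^ m) ^ (n - 1)"
proof -
  have "card {x::'a. (\<Sum>j<n. 1 * x ^ ((2 ^ m) ^ j)) = 0} \<le> (2 ^ m) ^ (n - 1)"
  proof (rule root_bound_sum[of "\<lambda>j. (2 ^ m) ^ j" n 0 "\<lambda>_. 1::'a"])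
    show "inj_on (\<lambda>j. ((2::nat) ^ m) ^ j) {..<n}"
      using q2 by (auto simp: inj_on_def power_inject_exp)
    show "0 < n" using n1 by simp
    show "((2::nat) ^ m) ^ j \<le> (2 ^ m) ^ (n - 1)" if "j < n" for j
      by (rule power_increasing) (use that q2 in auto)
  qed simp
  then show ?thesis unfolding rel_trace_def by simp
qed

lemma ah_Tr: "ah UNIV Tr" unfolding ah_def by (simp add: Tr_add)

lemma sg_U: "sg (UNIV :: 'a set)" unfolding sg_def by simp

lemma Tr_range: "range Tr = F" and card_F: "card F = 2 ^ m"
proof -
  let ?q = "(2::nat) ^ m"
  have N: "card (UNIV :: 'a set) = card (range Tr) * card {x. Tr x = 0}"
    using kernel_count[OF sg_U _ ah_Tr] by simp
  have "card (UNIV :: 'a set) = ?q * ?q ^ (n - 1)"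
    using cardN n1 by (simp add: qpow[symmetric] power_Suc[symmetric])
  then have "?q * ?q ^ (n - 1) \<le> card (range Tr) * ?q ^ (n - 1)"
    using N Tr_ker_card by (metis mult_le_mono2)
  then have ge: "?q \<le> card (range Tr)" by simp
  have sub: "range Tr \<subseteq> F" using Tr_F by auto
  have "card (range Tr) \<le> card F" by (rule card_mono) (use sub in auto)
  then have "card (range Tr) = card F" using ge F_card_le by simp
  then show "range Tr = F" using sub by (intro card_subset_eq) auto
  show "card F = 2 ^ m" using ge F_card_le \<open>card (range Tr) \<le> card F\<close> by simp
qed

lemma T_F_nz: "\<exists>z\<in>F. T z \<noteq> 0"
proof -
  obtain x0 where x0: "T x0 \<noteq> 0" using T_nz by blast
  have "T (Tr x0) = (\<Sum>i<m. (Tr (Tr x0)) ^ (2 ^ i))" by (rule T_Tr)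
  also have "\<dots> = (\<Sum>i<m. (Tr x0) ^ (2 ^ i))" using Tr_on_F[OF Tr_F] by simp
  also have "\<dots> = T x0" using T_Tr by simp
  finally show ?thesis using x0 Tr_F by metis
qed

lemma nondeg_F: "nondeg T F"
  unfolding nondeg_def
proof (intro ballI impI)
  fix u :: 'a assume u: "u \<in> F" "u \<noteq> 0"
  obtain z where z: "z \<in> F" "T z \<noteq> 0" using T_F_nz by blast
  then have "T ((z / u) * u) \<noteq> 0" using u by simp
  moreover have "z / u \<in> F" using F_div z u by blast
  ultimately show "\<exists>y\<in>F. T (y * u) \<noteq> 0" by blast
qed

lemma kerTr_perp: "{x. Tr x = 0} \<subseteq> perp T UNIV F"
proof
  fix y assume y: "y \<in> {x. Tr x = 0}"
  have "T (y * w) = 0" if "w \<in> F" for w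
  proof -
    have "T (y * w) = (\<Sum>i<m. (Tr (w * y)) ^ (2 ^ i))" by (simp add: T_Tr mult.commute)
    also have "\<dots> = 0" using Tr_mult_F[OF that] y by (simp add: power_0_left)
    finally show ?thesis .
  qed
  then show "y \<in> perp T UNIV F" by (simp add: perp_def)
qed

lemma perp_F: "perp T UNIV F = {x. Tr x = 0}"
proof -
  have "card F * card (perp T UNIV F) = card (UNIV :: 'a set)"
    by (rule DL[OF sg_U F_sg _ nondeg_U]) simp
  moreover have "card (UNIV :: 'a set) = card F * card {x. Tr x = 0}"
    using kernel_count[OF sg_U _ ah_Tr] Tr_range by simp
  moreover have "card F > 0" using card_F by simp
  moreover have "F \<noteq> {}" using F_0 by blast
  ultimately have "card {x. Tr x = 0} = card (perp T UNIV F)" by simp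
  then show ?thesis using kerTr_perp by (intro card_subset_eq[symmetric]) auto
qed

end

context ctx begin

abbreviation L :: "'a \<Rightarrow> 'a" where "L \<equiv> Lpoly m n a"
abbreviation Lad :: "'a \<Rightarrow> 'a" where "Lad \<equiv> Ladj m n a"
abbreviation c :: "nat \<Rightarrow> 'a" where "c i \<equiv> qlin (2 ^ m) n (a i) 1"

lemma L_expand: "L x = (\<Sum>i<m. \<Sum>j<n. a i j * x ^ (2 ^ (i + m * j)))"
  unfolding Lpoly_def qlin_def by (simp add: qpow pow_pow2)

lemma L_add: "L (x + y) = L x + L y"
  by (simp add: L_expand frob_add distrib_left sum.distrib)

lemma Lad_add: "Lad (x + y) = Lad x + Lad y"
  unfolding Ladj_def by (simp add: distrib_left frob_add sum.distrib)

lemma L_0[simp]: "L 0 = 0"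
  by (simp add: L_expand power_0_left)

lemma Lad_0[simp]: "Lad 0 = 0"
  unfolding Ladj_def by (simp add: power_0_left)

lemma T_shift:
  assumes "e \<le> m * n" shows "T (w ^ (2 ^ (m * n - e)) * x) = T (w * x ^ (2 ^ e))"
proof -
  have "T (w ^ (2 ^ (m * n - e)) * x) = T ((w ^ (2 ^ (m * n - e)) * x) ^ (2 ^ e))"
    by (simp add: T_frob)
  also have "(w ^ (2 ^ (m * n - e)) * x) ^ (2 ^ e) = w ^ (2 ^ (m * n)) * x ^ (2 ^ e)"
    using assms by (simp add: power_mult_distrib pow_pow2)
  finally show ?thesis by (simp add: fermat)
qed

lemma e_le: "i < m \<Longrightarrow> j < n \<Longrightarrow> i + m * j \<le> m * n"
proof -
  assume "i < m" "j < n"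
  then have "m * Suc j \<le> m * n" by (intro mult_le_mono2) simp
  then show ?thesis using \<open>i < m\<close> by simp
qed

lemma adj: "T (y * L x) = T (Lad y * x)"
proof -
  have "T (y * L x) = (\<Sum>i<m. \<Sum>j<n. T (y * (a i j * x ^ (2 ^ (i + m * j)))))"
    by (simp add: L_expand sum_distrib_left T_sum)
  also have "\<dots> = (\<Sum>i<m. \<Sum>j<n. T ((a i j * y) ^ (2 ^ (m * n - (i + m * j))) * x))"
  proof (intro sum.cong refl)
    fix i j assume "i \<in> {..<m}" "j \<in> {..<n}"
    then have "T ((a i j * y) ^ (2 ^ (m * n - (i + m * j))) * x) = T ((a i j * y) * x ^ (2 ^ (i + m * j)))"
      by (intro T_shift e_le) auto
    then show "T (y * (a i j * x ^ (2 ^ (i + m * j)))) = T ((a i j * y) ^ (2 ^ (m * n - (i + m * j))) * x)"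
      by (simp add: ac_simps)
  qed
  also have "\<dots> = T (Lad y * x)"
    unfolding Ladj_def by (simp add: sum_distrib_right T_sum)
  finally show ?thesis .
qed

lemma L_F: "b \<in> F \<Longrightarrow> L b = (\<Sum>i<m. c i * b ^ (2 ^ i))"
  unfolding Lpoly_def qlin_def by (simp add: F_powq F_pow2 sum_distrib_right)

definition fmap :: "'a \<Rightarrow> 'a" where "fmap x = Tr (x ^ (2 ^ m + 1)) + L x"

lemma c2_cancel: "((A::'a) + B + C + D + P + Q) + (A + P) = B + C + (D + Q)"
proof -
  have "((A::'a) + B + C + D + P + Q) + (A + P) = B + C + (D + Q) + (A + A) + (P + P)"
    by (simp only: ac_simps)
  then show ?thesis by simp
qed

lemma f_diff: "fmap (x + b) + fmap x = (Tr (x ^ (2 ^ m) * b) + Tr (x * b ^ (2 ^ m))) + (Tr (b ^ (2 ^ m + 1)) + L b)"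
proof -
  have p: "(y::'a) ^ (2 ^ m + 1) = y ^ (2 ^ m) * y" for y by simp
  have "(x + b) ^ (2 ^ m + 1) = x ^ (2 ^ m) * x + x ^ (2 ^ m) * b + b ^ (2 ^ m) * x + b ^ (2 ^ m) * b"
    unfolding p frob_add by (simp add: algebra_simps)
  then have "fmap (x + b) = Tr (x ^ (2 ^ m) * x) + Tr (x ^ (2 ^ m) * b) + Tr (x * b ^ (2 ^ m)) + Tr (b ^ (2 ^ m) * b) + L x + L b"
    unfolding fmap_def by (simp add: Tr_add L_add mult.commute add.assoc)
  moreover have "fmap x = Tr (x ^ (2 ^ m) * x) + L x" unfolding fmap_def p ..
  ultimately show ?thesis unfolding p by (simp only: c2_cancel)
qed

end

context ctx begin

lemma E_F: "b \<in> F \<Longrightarrow> Tr (x ^ (2 ^ m) * b) + Tr (x * b ^ (2 ^ m)) = 0"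
proof -
  assume b: "b \<in> F"
  have "Tr (x ^ (2 ^ m) * b) = Tr (b * x ^ (2 ^ m))" by (simp add: mult.commute)
  also have "\<dots> = b * Tr (x ^ (2 ^ m))" by (rule Tr_mult_F[OF b])
  also have "\<dots> = b * Tr x" using Tr_frobq by simp
  finally have "Tr (x ^ (2 ^ m) * b) = b * Tr x" .
  moreover have "Tr (x * b ^ (2 ^ m)) = b * Tr x"
  proof -
    have "Tr (x * b ^ (2 ^ m)) = Tr (b * x)" using b by (simp add: F_iff mult.commute)
    then show ?thesis using Tr_mult_F[OF b] by simp
  qed
  ultimately show ?thesis by simp
qed

lemma F_even_pow: "b ^ (2 ^ m) ^ 2 = b \<Longrightarrow> b ^ ((2 ^ m) ^ (2 * k)) = (b::'a)"
proof (induction k)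
  case (Suc k)
  have "((2::nat) ^ m) ^ (2 * Suc k) = (2 ^ m) ^ (2 * k) * (2 ^ m) ^ 2"
    by (simp add: power_add[symmetric])
  then have "b ^ ((2 ^ m) ^ (2 * Suc k)) = (b ^ ((2 ^ m) ^ (2 * k))) ^ ((2 ^ m) ^ 2)"
    by (simp only: power_mult)
  then show ?case using Suc by simp
qed simp

lemma E_notF:
  assumes b: "b \<notin> F"
  obtains cb where "cb \<noteq> 0" "\<And>x. Tr (x ^ (2 ^ m) * b) + Tr (x * b ^ (2 ^ m)) = Tr (x * cb)"
proof -
  let ?q = "(2::nat) ^ m"
  define cb where "cb = b ^ (?q ^ (n - 1)) + b ^ ?q"
  have nq: "?q * ?q ^ (n - 1) = ?q ^ n" using n1 by (simp add: power_Suc[symmetric])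
  have e1: "Tr (x ^ ?q * b) = Tr (x * b ^ (?q ^ (n - 1)))" for x
  proof -
    have "Tr (x ^ ?q * b) = Tr ((x ^ ?q * b) ^ (?q ^ (n - 1)))" by (simp add: Tr_frobqk)
    also have "(x ^ ?q * b) ^ (?q ^ (n - 1)) = x ^ (?q ^ n) * b ^ (?q ^ (n - 1))"
    proof -
      have "(x ^ ?q) ^ (?q ^ (n - 1)) = x ^ (?q ^ n)" by (simp only: power_mult[of x, symmetric] nq)
      then show ?thesis by (simp only: power_mult_distrib)
    qed
    finally show ?thesis by (simp only: qpow_wrap)
  qed
  have "cb \<noteq> 0"
  proof
    assume "cb = 0"
    then have eq: "b ^ (?q ^ (n - 1)) = b ^ ?q" unfolding cb_def by (simp add: sum_zero_iff)
    have "b ^ (?q ^ 2) = (b ^ (?q ^ (n - 1))) ^ ?q" using eq by (simp add: power_mult[symmetric] power2_eq_square)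
    also have "\<dots> = b ^ (?q ^ n)"
      by (simp only: power_mult[of b, symmetric] mult.commute[of "?q ^ (n - 1)" ?q] nq)
    also have "\<dots> = b" by (rule qpow_wrap)
    finally have b2: "b ^ (?q ^ 2) = b" .
    obtain k where k: "n = 2 * k + 1" using oddn oddE by blast
    have "b = b ^ (?q ^ n)" by (simp add: qpow_wrap)
    also have "\<dots> = (b ^ (?q ^ (2 * k))) ^ ?q" unfolding k by (simp add: power_mult[symmetric] mult.commute)
    also have "\<dots> = b ^ ?q" using F_even_pow[of b k] b2 by simp
    finally have "b ^ ?q = b" by simp
    then show False using b F_iff by blast
  qed
  moreover have "Tr (x ^ ?q * b) + Tr (x * b ^ ?q) = Tr (x * cb)" for x
    unfolding e1 cb_def by (simp add: distrib_left Tr_add)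
  ultimately show ?thesis using that by blast
qed

lemma range_Trc: "cb \<noteq> 0 \<Longrightarrow> range (\<lambda>x. Tr (x * cb)) = F"
proof -
  assume "cb \<noteq> 0"
  have "range (\<lambda>x. Tr (x * cb)) = Tr ` range (\<lambda>x. x * cb)" by (simp add: image_image)
  also have "range (\<lambda>x. x * cb) = UNIV"
  proof (intro set_eqI iffI)
    fix y :: 'a show "y \<in> range (\<lambda>x. x * cb)" using \<open>cb \<noteq> 0\<close> by (intro image_eqI[of _ _ "y / cb"]) auto
  qed auto
  finally show ?thesis using Tr_range by simp
qed

lemma bij_iff_AB:
  "bij fmap \<longleftrightarrow> (\<forall>b\<in>F. b \<noteq> 0 \<longrightarrow> b ^ 2 + L b \<noteq> 0) \<and> (\<forall>b. L b \<in> F \<longrightarrow> b \<in> F)"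
proof -
  have "finite (UNIV :: 'a set)" by simp
  then have "bij fmap \<longleftrightarrow> inj fmap" unfolding bij_def using finite_UNIV_inj_surj[of fmap] by blast
  also have "inj fmap \<longleftrightarrow> (\<forall>b. b \<noteq> 0 \<longrightarrow> (\<forall>x. fmap (x + b) \<noteq> fmap x))"
  proof
    assume "inj fmap" then show "\<forall>b. b \<noteq> 0 \<longrightarrow> (\<forall>x. fmap (x + b) \<noteq> fmap x)"
      by (metis add_cancel_left_right injD)
  next
    assume h: "\<forall>b. b \<noteq> 0 \<longrightarrow> (\<forall>x. fmap (x + b) \<noteq> fmap x)"
    show "inj fmap"
    proof (rule injI)
      fix x y assume "fmap x = fmap y"
      moreover have "x + (y - x) = y" by (metis add.commute diff_add_cancel)
      ultimately have "fmap (x + (y - x)) = fmap x" by metis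
      then have "y - x = 0" using h by blast
      then have "y = x" by (simp only: right_minus_eq)
      then show "x = y" by simp
    qed
  qed
  also have "\<dots> \<longleftrightarrow> (\<forall>b. b \<noteq> 0 \<longrightarrow> (\<forall>x. Tr (x ^ (2 ^ m) * b) + Tr (x * b ^ (2 ^ m)) \<noteq> Tr (b ^ (2 ^ m + 1)) + L b))"
  proof -
    have key: "fmap (x + b) = fmap x \<longleftrightarrow>
      Tr (x ^ (2 ^ m) * b) + Tr (x * b ^ (2 ^ m)) = Tr (b ^ (2 ^ m + 1)) + L b" for x b
    proof -
      have "fmap (x + b) = fmap x \<longleftrightarrow> fmap (x + b) + fmap x = 0" by (rule sum_zero_iff[symmetric])
      also have "\<dots> \<longleftrightarrow> (Tr (x ^ (2 ^ m) * b) + Tr (x * b ^ (2 ^ m))) + (Tr (b ^ (2 ^ m + 1)) + L b) = 0"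
        by (simp only: f_diff)
      also have "\<dots> \<longleftrightarrow> Tr (x ^ (2 ^ m) * b) + Tr (x * b ^ (2 ^ m)) = Tr (b ^ (2 ^ m + 1)) + L b"
        by (rule sum_zero_iff)
      finally show ?thesis .
    qed
    show ?thesis by (simp only: key)
  qed
  also have "\<dots> \<longleftrightarrow> (\<forall>b\<in>F. b \<noteq> 0 \<longrightarrow> b ^ 2 + L b \<noteq> 0) \<and> (\<forall>b. L b \<in> F \<longrightarrow> b \<in> F)"
  proof -
    have inF: "b \<in> F \<Longrightarrow> (\<forall>x. Tr (x ^ (2 ^ m) * b) + Tr (x * b ^ (2 ^ m)) \<noteq> Tr (b ^ (2 ^ m + 1)) + L b)
        \<longleftrightarrow> b ^ 2 + L b \<noteq> 0" for b
    proof -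
      assume b: "b \<in> F"
      have "b ^ (2 ^ m + 1) = b ^ 2" using b by (simp add: F_iff power2_eq_square)
      moreover have "Tr (b ^ 2) = b ^ 2" using b by (intro Tr_on_F) (simp add: F_mult power2_eq_square)
      ultimately show ?thesis using E_F[OF b] by auto
    qed
    have notF: "b \<notin> F \<Longrightarrow> (\<forall>x. Tr (x ^ (2 ^ m) * b) + Tr (x * b ^ (2 ^ m)) \<noteq> Tr (b ^ (2 ^ m + 1)) + L b)
        \<longleftrightarrow> L b \<notin> F" for b
    proof -
      assume b: "b \<notin> F"
      obtain cb where cb: "cb \<noteq> 0" "\<And>x. Tr (x ^ (2 ^ m) * b) + Tr (x * b ^ (2 ^ m)) = Tr (x * cb)"
        using E_notF[OF b] by blast
      have "(\<forall>x. Tr (x * cb) \<noteq> Tr (b ^ (2 ^ m + 1)) + L b) \<longleftrightarrow> Tr (b ^ (2 ^ m + 1)) + L b \<notin> F"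
        using range_Trc[OF cb(1)] by (metis (mono_tags, lifting) rangeE rangeI)
      also have "\<dots> \<longleftrightarrow> L b \<notin> F"
      proof -
        have "Tr (b ^ (2 ^ m + 1)) + (Tr (b ^ (2 ^ m + 1)) + L b) = L b" by (simp add: add.assoc[symmetric])
        then show ?thesis using F_add Tr_F by metis
      qed
      finally show ?thesis using cb(2) by simp
    qed
    show ?thesis
    proof
      assume h: "\<forall>b. b \<noteq> 0 \<longrightarrow> (\<forall>x. Tr (x ^ (2 ^ m) * b) + Tr (x * b ^ (2 ^ m)) \<noteq> Tr (b ^ (2 ^ m + 1)) + L b)"
      have "\<forall>b\<in>F. b \<noteq> 0 \<longrightarrow> b ^ 2 + L b \<noteq> 0" using h inF by blast
      moreover have "\<forall>b. L b \<in> F \<longrightarrow> b \<in> F"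
      proof (intro allI impI)
        fix b assume "L b \<in> F"
        show "b \<in> F"
        proof (rule ccontr)
          assume "b \<notin> F"
          then have "b \<noteq> 0" using F_0 by blast
          then show False using h notF[OF \<open>b \<notin> F\<close>] \<open>L b \<in> F\<close> by blast
        qed
      qed
      ultimately show "(\<forall>b\<in>F. b \<noteq> 0 \<longrightarrow> b ^ 2 + L b \<noteq> 0) \<and> (\<forall>b. L b \<in> F \<longrightarrow> b \<in> F)" by blast
    next
      assume h: "(\<forall>b\<in>F. b \<noteq> 0 \<longrightarrow> b ^ 2 + L b \<noteq> 0) \<and> (\<forall>b. L b \<in> F \<longrightarrow> b \<in> F)"
      show "\<forall>b. b \<noteq> 0 \<longrightarrow> (\<forall>x. Tr (x ^ (2 ^ m) * b) + Tr (x * b ^ (2 ^ m)) \<noteq> Tr (b ^ (2 ^ m + 1)) + L b)"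
      proof (rule allI, rule impI)
        fix b :: 'a assume "b \<noteq> 0"
        show "\<forall>x. Tr (x ^ (2 ^ m) * b) + Tr (x * b ^ (2 ^ m)) \<noteq> Tr (b ^ (2 ^ m + 1)) + L b"
        proof (cases "b \<in> F")
          case True then show ?thesis using inF h \<open>b \<noteq> 0\<close> by blast
        next
          case False then show ?thesis using notF h by blast
        qed
      qed
    qed
  qed
  finally show ?thesis .
qed

end

context ctx begin

abbreviation S :: "'a set" where "S \<equiv> {b. L b \<in> F}"
abbreviation Sig :: "'a set" where "Sig \<equiv> sumset (range L) F"
abbreviation Kc :: "'a set" where "Kc \<equiv> {x. Tr x = 0} \<inter> {x. Lad x = 0}"

lemma ah_L: "ah V L" unfolding ah_def by (simp add: L_add)

lemma sg_S: "sg S"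
  by (rule sg_c2) (auto simp: L_add intro: F_add)

lemma sg_rangeL: "sg (range L)" by (rule ah_image_sg[OF sg_U ah_L])

lemma sumset_iff: "z \<in> sumset A B \<longleftrightarrow> (\<exists>x\<in>A. \<exists>y\<in>B. z = x + y)"
  unfolding sumset_def by auto

lemma sumset_sg: "sg A \<Longrightarrow> sg B \<Longrightarrow> sg (sumset A (B::'a set))"
proof (rule sg_c2)
  assume A: "sg A" and B: "sg B"
  show "0 \<in> sumset A B" using A B unfolding sumset_iff sg_def by force
  fix x y assume "x \<in> sumset A B" "y \<in> sumset A B"
  then obtain a b a' b' where ab: "a \<in> A" "b \<in> B" "x = a + b" "a' \<in> A" "b' \<in> B" "y = a' + b'"
    unfolding sumset_iff by blast
  then have "x + y = (a + a') + (b + b')" by (simp add: ac_simps)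
  moreover have "a + a' \<in> A" "b + b' \<in> B" using A B ab unfolding sg_def by auto
  ultimately show "x + y \<in> sumset A B" unfolding sumset_iff by blast
qed

lemma count_S: "card S * card Sig = card (UNIV :: 'a set) * card F"
proof -
  have k1: "card S = card (L ` S) * card {x \<in> S. L x = 0}"
    by (rule kernel_count[OF sg_S _ ah_L]) simp
  have e1: "{x \<in> S. L x = 0} = {x. L x = 0}" using F_0 by auto
  have e2: "L ` S = range L \<inter> F" by auto
  have k2: "card (UNIV :: 'a set) = card (range L) * card {x. L x = 0}"
    using kernel_count[OF sg_U _ ah_L] by simp
  have k3: "card (range L \<inter> F) * card Sig = card (range L) * card F"
    by (rule sumset_count[OF sg_rangeL F_sg]) simp_all
  have "card S * card Sig = (card (range L \<inter> F) * card Sig) * card {x. L x = 0}"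
    using k1 e1 e2 by (simp add: ac_simps)
  also have "\<dots> = (card (range L) * card F) * card {x. L x = 0}" using k3 by simp
  also have "\<dots> = card (UNIV :: 'a set) * card F" using k2 by (simp add: ac_simps)
  finally show ?thesis .
qed

lemma perp_Sig: "perp T UNIV Sig = Kc"
proof (intro set_eqI iffI)
  fix y assume y: "y \<in> perp T UNIV Sig"
  then have h: "\<And>z. z \<in> Sig \<Longrightarrow> T (y * z) = 0" by (auto simp: perp_def)
  have "Lad y = 0"
  proof (rule ccontr)
    assume "Lad y \<noteq> 0"
    then obtain x where x: "T (x * Lad y) \<noteq> 0" using nondeg_U unfolding nondeg_def by blast
    have "L x \<in> Sig" unfolding sumset_iff by (rule bexI[of _ "L x"], rule bexI[of _ 0]) auto
    then have "T (y * L x) = 0" by (rule h)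
    then show False using x adj by (simp add: mult.commute)
  qed
  moreover have "y \<in> perp T UNIV F"
  proof -
    have r0: "0 \<in> range L" by (metis L_0 rangeI)
    have "w \<in> Sig" if "w \<in> F" for w unfolding sumset_iff using that r0
      by (intro bexI[of _ 0] bexI[of _ w]) auto
    then show ?thesis using h by (auto simp: perp_def)
  qed
  ultimately show "y \<in> Kc" using perp_F by auto
next
  fix y assume y: "y \<in> Kc"
  have "T (y * z) = 0" if "z \<in> Sig" for z
  proof -
    obtain x w where z: "w \<in> F" "z = L x + w" using \<open>z \<in> Sig\<close> unfolding sumset_iff by blast
    have "T (y * w) = 0" using kerTr_perp y z(1) by (auto simp: perp_def)
    moreover have "T (y * L x) = 0" using adj y by simp
    ultimately show ?thesis using z by (simp add: distrib_left T_add)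
  qed
  then show "y \<in> perp T UNIV Sig" by (simp add: perp_def)
qed

lemma card_Sig_Kc: "card Sig * card Kc = card (UNIV :: 'a set)"
  using DL[OF sg_U sumset_sg[OF sg_rangeL F_sg] _ nondeg_U] perp_Sig by simp

lemma N_pos: "card (UNIV :: 'a set) > 0" using cardN by simp

lemma C3_iff: "Kc = {0} \<longleftrightarrow> card S = card F"
proof -
  have z: "0 \<in> Kc" by simp
  have "Kc = {0} \<longleftrightarrow> card Kc = 1"
  proof
    assume "card Kc = 1"
    then obtain u where "Kc = {u}" by (rule card_1_singletonE)
    then show "Kc = {0}" using z by auto
  qed simp
  also have "\<dots> \<longleftrightarrow> card Sig = card (UNIV :: 'a set)"
    using card_Sig_Kc N_pos by (metis mult.right_neutral mult_cancel1 neq0_conv)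
  also have "\<dots> \<longleftrightarrow> card S = card F"
    using count_S N_pos card_F by (metis mult.commute mult_cancel1 neq0_conv zero_less_power zero_less_numeral)
  finally show ?thesis .
qed

lemma LF_imp_C1:
  assumes LF: "\<forall>b\<in>F. L b \<in> F" shows "\<forall>i<m. c i \<in> F"
proof (rule ccontr)
  assume "\<not> (\<forall>i<m. c i \<in> F)"
  then obtain i0 where i0: "i0 < m" "c i0 \<notin> F" by blast
  define d where "d i = c i ^ (2 ^ m) + c i" for i
  have d0: "d i0 \<noteq> 0" using i0 by (simp add: d_def F_iff sum_zero_iff)
  have sub: "F \<subseteq> {x. (\<Sum>i<m. d i * x ^ (2 ^ i)) = 0}"
  proof
    fix b assume b: "b \<in> F"
    define X where "X = (\<Sum>i<m. c i * b ^ (2 ^ i))"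
    have "X \<in> F" using LF b by (simp add: X_def L_F[OF b, symmetric])
    then have XX: "X ^ (2 ^ m) = X" by (simp add: F_iff)
    have "X ^ (2 ^ m) = (\<Sum>i<m. c i ^ (2 ^ m) * b ^ (2 ^ i))"
      unfolding X_def frob_sum
      by (intro sum.cong refl) (simp add: power_mult_distrib F_pow2[OF b, unfolded F_iff])
    then have "(\<Sum>i<m. d i * b ^ (2 ^ i)) = X ^ (2 ^ m) + X"
      unfolding d_def X_def by (simp add: distrib_right sum.distrib)
    then show "b \<in> {x. (\<Sum>i<m. d i * x ^ (2 ^ i)) = 0}" using XX by simp
  qed
  have "card {x. (\<Sum>i<m. d i * x ^ (2 ^ i)) = 0} \<le> 2 ^ (m - 1)"
  proof (rule root_bound_sum[of "\<lambda>i. 2 ^ i" m i0 d])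
    show "inj_on (\<lambda>i. (2::nat) ^ i) {..<m}" by (auto simp: inj_on_def)
    show "(2::nat) ^ i \<le> 2 ^ (m - 1)" if "i < m" for i
      by (rule power_increasing) (use that in auto)
  qed (use i0 d0 in auto)
  moreover have "card F \<le> card {x. (\<Sum>i<m. d i * x ^ (2 ^ i)) = 0}"
    by (rule card_mono) (use sub in auto)
  moreover have "(2::nat) ^ (m - 1) < 2 ^ m" using m1 by simp
  ultimately show False using card_F by linarith
qed

lemma C1_imp_LF: "\<forall>i<m. c i \<in> F \<Longrightarrow> b \<in> F \<Longrightarrow> L b \<in> F"
  by (auto simp: L_F intro!: F_sum F_mult F_pow2)

definition gmap :: "'a \<Rightarrow> 'a" where "gmap b = b ^ 2 + L b"
definition lmap :: "'a \<Rightarrow> 'a" where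
  "lmap y = (\<Sum>i<m. (c i * y) ^ (2 ^ (m - i))) + y ^ (2 ^ (m - 1))"

lemma sq_add: "((x::'a) + y) ^ 2 = x ^ 2 + y ^ 2"
  using frob_add[of x y 1] by simp

lemma ah_g: "ah F gmap"
  unfolding ah_def gmap_def by (simp add: sq_add L_add ac_simps)

lemma ah_l: "ah F lmap"
  unfolding ah_def lmap_def by (simp add: distrib_left distrib_right frob_add sum.distrib ac_simps)

lemma g_F: "\<forall>i<m. c i \<in> F \<Longrightarrow> b \<in> F \<Longrightarrow> gmap b \<in> F"
  unfolding gmap_def by (intro F_add C1_imp_LF) (auto simp: power2_eq_square intro: F_mult)

lemma l_F: "\<forall>i<m. c i \<in> F \<Longrightarrow> y \<in> F \<Longrightarrow> lmap y \<in> F"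
  unfolding lmap_def by (intro F_add F_sum F_pow2 F_mult) auto

lemma T_shiftF:
  assumes x: "x \<in> F" and e: "e \<le> m"
  shows "T (w ^ (2 ^ (m - e)) * x) = T (w * x ^ (2 ^ e))"
proof -
  have "T (w * x ^ (2 ^ e)) = T ((w * x ^ (2 ^ e)) ^ (2 ^ (m - e)))" by (simp add: T_frob)
  also have "(w * x ^ (2 ^ e)) ^ (2 ^ (m - e)) = w ^ (2 ^ (m - e)) * x ^ (2 ^ m)"
    using e by (simp add: power_mult_distrib pow_pow2)
  finally show ?thesis using x by (simp add: F_iff)
qed

lemma adj_gl: "x \<in> F \<Longrightarrow> T (y * gmap x) = T (lmap y * x)"
proof -
  assume x: "x \<in> F"
  have "T (y * gmap x) = T (y * x ^ 2) + (\<Sum>i<m. T (y * (c i * x ^ (2 ^ i))))"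
    unfolding gmap_def L_F[OF x] by (simp add: distrib_left sum_distrib_left T_add T_sum)
  also have "(\<Sum>i<m. T (y * (c i * x ^ (2 ^ i)))) = (\<Sum>i<m. T ((c i * y) ^ (2 ^ (m - i)) * x))"
  proof (intro sum.cong refl)
    fix i assume "i \<in> {..<m}"
    then have "T ((c i * y) ^ (2 ^ (m - i)) * x) = T ((c i * y) * x ^ (2 ^ i))"
      by (intro T_shiftF x) auto
    then show "T (y * (c i * x ^ (2 ^ i))) = T ((c i * y) ^ (2 ^ (m - i)) * x)" by (simp add: ac_simps)
  qed
  also have "T (y * x ^ 2) = T (y ^ (2 ^ (m - 1)) * x)"
    using T_shiftF[OF x, of 1 y] m1 by simp
  finally show ?thesis unfolding lmap_def by (simp add: distrib_right sum_distrib_right T_add T_sum add.commute)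
qed

lemma g0: "gmap 0 = 0" unfolding gmap_def by simp

lemma A_iff_inj: "(\<forall>b\<in>F. b \<noteq> 0 \<longrightarrow> b ^ 2 + L b \<noteq> 0) \<longleftrightarrow> inj_on gmap F"
proof
  assume A: "\<forall>b\<in>F. b \<noteq> 0 \<longrightarrow> b ^ 2 + L b \<noteq> 0"
  show "inj_on gmap F"
  proof (rule inj_onI)
    fix x y assume xy: "x \<in> F" "y \<in> F" "gmap x = gmap y"
    then have "gmap (x + y) = 0" using ah_g unfolding ah_def by simp
    moreover have "x + y \<in> F" using xy F_add by blast
    ultimately have "x + y = 0" using A unfolding gmap_def by blast
    then show "x = y" by (simp add: sum_zero_iff)
  qed
next
  assume "inj_on gmap F"
  then show "\<forall>b\<in>F. b \<noteq> 0 \<longrightarrow> b ^ 2 + L b \<noteq> 0"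
    using g0 F_0 unfolding inj_on_def gmap_def by metis
qed

lemma inj_g_l: "\<forall>i<m. c i \<in> F \<Longrightarrow> inj_on gmap F \<longleftrightarrow> inj_on lmap F"
proof -
  assume C1: "\<forall>i<m. c i \<in> F"
  have "card {x \<in> F. gmap x = 0} = card {y \<in> F. lmap y = 0}"
    by (rule GD[OF F_sg nondeg_F g_F[OF C1] l_F[OF C1] ah_g adj_gl])
  then show ?thesis using ker_one[OF F_sg ah_g] ker_one[OF F_sg ah_l] by simp
qed

lemma bij_l: "\<forall>i<m. c i \<in> F \<Longrightarrow> bij_betw lmap F F \<longleftrightarrow> inj_on lmap F"
  unfolding bij_betw_def using endo_inj_surj[of F lmap] l_F by auto

theorem main_ctx: "bij fmap \<longleftrightarrow> (\<forall>i<m. c i \<in> F) \<and> bij_betw lmap F F \<and> Kc = {0}"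
proof
  assume "bij fmap"
  then have A: "\<forall>b\<in>F. b \<noteq> 0 \<longrightarrow> b ^ 2 + L b \<noteq> 0" and B: "\<forall>b. L b \<in> F \<longrightarrow> b \<in> F"
    using bij_iff_AB by auto
  have SF: "S \<subseteq> F" using B by auto
  have "card Sig \<le> card (UNIV :: 'a set)" by (rule card_mono) auto
  then have "card (UNIV :: 'a set) * card F \<le> card (UNIV :: 'a set) * card S"
    using count_S by (metis mult.commute mult_le_mono2)
  then have "card F \<le> card S" using N_pos by simp
  then have SeqF: "S = F" using SF by (intro card_seteq) auto
  then have LF: "\<forall>b\<in>F. L b \<in> F" by auto
  have C1: "\<forall>i<m. c i \<in> F" by (rule LF_imp_C1[OF LF])
  have "inj_on lmap F" using A A_iff_inj inj_g_l[OF C1] by simp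
  then have "bij_betw lmap F F" using bij_l[OF C1] by simp
  moreover have "Kc = {0}" using C3_iff SeqF by simp
  ultimately show "(\<forall>i<m. c i \<in> F) \<and> bij_betw lmap F F \<and> Kc = {0}" using C1 by simp
next
  assume h: "(\<forall>i<m. c i \<in> F) \<and> bij_betw lmap F F \<and> Kc = {0}"
  then have C1: "\<forall>i<m. c i \<in> F" by simp
  have A: "\<forall>b\<in>F. b \<noteq> 0 \<longrightarrow> b ^ 2 + L b \<noteq> 0"
    using h bij_l[OF C1] inj_g_l[OF C1] A_iff_inj by simp
  have "card S = card F" using h C3_iff by simp
  moreover have "F \<subseteq> S" using C1_imp_LF[OF C1] by auto
  ultimately have "F = S" by (intro card_subset_eq) auto
  then have B: "\<forall>b. L b \<in> F \<longrightarrow> b \<in> F" by auto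
  show "bij fmap" using bij_iff_AB A B by simp
qed

end

theorem mainTheorem1:
  fixes m n :: nat
    and a :: "nat \<Rightarrow> nat \<Rightarrow> 'a::{finite, field}"
  assumes "m \<ge> 1" and "odd n" and "card (UNIV :: 'a set) = 2 ^ (m * n)"
  shows "bij (\<lambda>x::'a. rel_trace (2 ^ m) n (x ^ (2 ^ m + 1)) + Lpoly m n a x)
     \<longleftrightarrow> (\<forall>i<m. qlin (2 ^ m) n (a i) 1 \<in> subfield_q (2 ^ m))
       \<and> bij_betw (\<lambda>x. (\<Sum>i<m. (qlin (2 ^ m) n (a i) 1 * x) ^ (2 ^ (m - i))) + x ^ (2 ^ (m - 1)))
            (subfield_q (2 ^ m)) (subfield_q (2 ^ m))
       \<and> {x. rel_trace (2 ^ m) n x = 0} \<inter> {x. Ladj m n a x = 0} = {0}"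
proof -
  interpret ctx m n a using assms by (simp add: ctx_def)
  have f: "(\<lambda>x::'a. rel_trace (2 ^ m) n (x ^ (2 ^ m + 1)) + Lpoly m n a x) = fmap"
    by (simp add: fun_eq_iff fmap_def)
  have l: "(\<lambda>x. (\<Sum>i<m. (qlin (2 ^ m) n (a i) 1 * x) ^ (2 ^ (m - i))) + x ^ (2 ^ (m - 1))) = lmap"
    by (simp add: fun_eq_iff lmap_def)
  show ?thesis unfolding f l by (rule main_ctx)
qed

end
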